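(* Let $m,n\in\mathbb{N}$, and fix a word pattern of $m$ letters $S$ and $n$ letters $T$ whose last letter is $S$. Then there are integers $c_1,\dots,c_m$, depending only on the pattern and not on $g$, such that for every $g\in\mathcal{H}(\mathbb{D})$ the corresponding $g$-word $L\in W^S_g(m,n)$ satisfies $$L=S_g^mT_g^n\Pi_0+\sum_{j=1}^mc_jS_g^{m-j}T_g^{n+j}\Pi_0.$$
   Context: $\mathcal{H}(\mathbb{D})$ analytic functions on the unit disc; $\Pi_0f=f-f(0)$. For $g\in\mathcal{H}(\mathbb{D})$: $T_gf(z)=\int_0^zf(\zeta)g'(\zeta)d\zeta$, $S_gf(z)=\int_0^zf'(\zeta)g(\zeta)d\zeta$, with $S_g^0$ the identity. $W^S_g(m,n)$ is the set of products of $m$ factors $S_g$ and $n$ factors $T_g$ (in any order) whose last (rightmost) factor is $S_g$. *)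

theory Defs
  imports "HOL-Complex_Analysis.Complex_Analysis"
begin

definition unit_disc :: "complex set" where
  "unit_disc = ball 0 1"

definition Pi0 :: "(complex \<Rightarrow> complex) \<Rightarrow> (complex \<Rightarrow> complex)" where
  "Pi0 f = (\<lambda>z. f z - f 0)"

definition T_op :: "(complex \<Rightarrow> complex) \<Rightarrow> (complex \<Rightarrow> complex) \<Rightarrow> (complex \<Rightarrow> complex)" where
  "T_op g f = (\<lambda>z. contour_integral (linepath 0 z) (\<lambda>\<zeta>. f \<zeta> * deriv g \<zeta>))"

definition S_op :: "(complex \<Rightarrow> complex) \<Rightarrow> (complex \<Rightarrow> complex) \<Rightarrow> (complex \<Rightarrow> complex)" where
  "S_op g f = (\<lambda>z. contour_integral (linepath 0 z) (\<lambda>\<zeta>. deriv f \<zeta> * g \<zeta>))"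

text \<open>A word pattern is a list of letters: True stands for S, False for T.
  The corresponding g-word is the product of the operators in the order of the list,
  so the last list element is the rightmost factor (applied first).\<close>
definition word_op :: "(complex \<Rightarrow> complex) \<Rightarrow> bool list \<Rightarrow> (complex \<Rightarrow> complex) \<Rightarrow> (complex \<Rightarrow> complex)" where
  "word_op g w = foldr (\<lambda>b acc. (if b then S_op g else T_op g) \<circ> acc) w id"

end

theory Submission
  imports Defs
begin


lemma D_open: "open unit_disc" by (simp add: unit_disc_def)
lemma D_zero: "0 \<in> unit_disc" by (simp add: unit_disc_def)
lemma D_seg: "z \<in> unit_disc \<Longrightarrow> closed_segment 0 z \<subseteq> unit_disc"
  unfolding unit_disc_def using convex_ball[of "0::complex" 1] unfolding convex_contains_segment by (meson centre_in_ball zero_less_one)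

lemma prim_eq:
  assumes "\<And>x. x \<in> unit_disc \<Longrightarrow> (F has_field_derivative F' x) (at x)" "z \<in> unit_disc"
  shows "contour_integral (linepath 0 z) F' = F z - F 0"
proof -
  have "(F' has_contour_integral (F (pathfinish (linepath 0 z)) - F (pathstart (linepath 0 z)))) (linepath 0 z)"
    by (rule contour_integral_primitive[where S=unit_disc, OF _ valid_path_linepath])
       (use assms D_seg[OF assms(2)] in \<open>auto intro: has_field_derivative_at_within\<close>)
  then show ?thesis by (simp add: contour_integral_unique)
qed

lemma zero_deriv:
  assumes "\<And>x. x \<in> unit_disc \<Longrightarrow> (F has_field_derivative 0) (at x)" "z \<in> unit_disc" "F 0 = 0"
  shows "F z = 0"
  using prim_eq[of F "\<lambda>_. 0" z] assms by simp

lemma D_convex: "convex unit_disc" by (simp add: unit_disc_def)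

lemma prim:
  assumes "\<phi> holomorphic_on unit_disc" "z \<in> unit_disc"
  shows "((\<lambda>z. contour_integral (linepath 0 z) \<phi>) has_field_derivative \<phi> z) (at z)"
proof -
  obtain G where G: "\<And>x. x \<in> unit_disc \<Longrightarrow> (G has_field_derivative \<phi> x) (at x within unit_disc)"
    using holomorphic_convex_primitive'[OF D_convex D_open assms(1)] by blast
  have G': "\<And>x. x \<in> unit_disc \<Longrightarrow> (G has_field_derivative \<phi> x) (at x)"
    using G D_open at_within_open by metis
  have eq: "\<And>x. x \<in> unit_disc \<Longrightarrow> G x - G 0 = contour_integral (linepath 0 x) \<phi>"
    using prim_eq[OF G'] by simp
  have "((\<lambda>x. G x - G 0) has_field_derivative \<phi> z - 0) (at z)"
    by (rule DERIV_diff[OF G'[OF assms(2)] DERIV_const])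
  then have "((\<lambda>x. G x - G 0) has_field_derivative \<phi> z) (at z)" by simp
  then show ?thesis
    by (rule has_field_derivative_transform_within_open[OF _ D_open assms(2)]) (rule eq)
qed

lemma T_deriv:
  assumes "g holomorphic_on unit_disc" "u holomorphic_on unit_disc" "z \<in> unit_disc"
  shows "(T_op g u has_field_derivative u z * deriv g z) (at z)"
  unfolding T_op_def
  by (rule prim[OF holomorphic_on_mult[OF assms(2) holomorphic_deriv[OF assms(1) D_open]] assms(3)])

lemma S_deriv:
  assumes "g holomorphic_on unit_disc" "u holomorphic_on unit_disc" "z \<in> unit_disc"
  shows "(S_op g u has_field_derivative deriv u z * g z) (at z)"
  unfolding S_op_def
  by (rule prim[OF holomorphic_on_mult[OF holomorphic_deriv[OF assms(2) D_open] assms(1)] assms(3)])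

lemma T_hol: assumes "g holomorphic_on unit_disc" "u holomorphic_on unit_disc" shows "T_op g u holomorphic_on unit_disc"
  unfolding holomorphic_on_open[OF D_open] using T_deriv[OF assms] by blast

lemma S_hol: assumes "g holomorphic_on unit_disc" "u holomorphic_on unit_disc" shows "S_op g u holomorphic_on unit_disc"
  unfolding holomorphic_on_open[OF D_open] using S_deriv[OF assms] by blast

lemma T_0[simp]: "T_op g u 0 = 0" by (simp add: T_op_def)
lemma S_0[simp]: "S_op g u 0 = 0" by (simp add: S_op_def)

lemma hol_deriv: "u holomorphic_on unit_disc \<Longrightarrow> x \<in> unit_disc \<Longrightarrow> (u has_field_derivative deriv u x) (at x)"
  by (rule holomorphic_derivI[OF _ D_open])

lemma TS:
  assumes g: "g holomorphic_on unit_disc" and h: "h holomorphic_on unit_disc" "h 0 = 0"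
    and z: "z \<in> unit_disc"
  shows "T_op g (S_op g h) z = S_op g (T_op g h) z - T_op g (T_op g h) z"
proof -
  have G0: "T_op g h x + S_op g h x - h x * g x = 0" if x: "x \<in> unit_disc" for x
  proof (rule zero_deriv[where F="\<lambda>x. T_op g h x + S_op g h x - h x * g x", OF _ x])
    fix y assume y: "y \<in> unit_disc"
    show "((\<lambda>x. T_op g h x + S_op g h x - h x * g x) has_field_derivative 0) (at y)"
      using DERIV_diff[OF DERIV_add[OF T_deriv[OF g h(1) y] S_deriv[OF g h(1) y]] DERIV_mult[OF hol_deriv[OF h(1) y] hol_deriv[OF g y]]]
      by (simp add: algebra_simps)
  qed (simp add: h(2))
  have Th: "T_op g h holomorphic_on unit_disc" and Sh: "S_op g h holomorphic_on unit_disc"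
    by (rule T_hol[OF g h(1)], rule S_hol[OF g h(1)])
  have "S_op g (T_op g h) z - T_op g (T_op g h) z - T_op g (S_op g h) z = 0"
  proof (rule zero_deriv[where F="\<lambda>x. S_op g (T_op g h) x - T_op g (T_op g h) x - T_op g (S_op g h) x", OF _ z])
    fix y assume y: "y \<in> unit_disc"
    have dT: "deriv (T_op g h) y = h y * deriv g y"
      using T_deriv[OF g h(1) y] by (rule DERIV_imp_deriv)
    have e: "T_op g h y * deriv g y + S_op g h y * deriv g y = h y * g y * deriv g y"
    proof -
      have "T_op g h y + S_op g h y = h y * g y" using G0[OF y] by simp
      then have "(T_op g h y + S_op g h y) * deriv g y = h y * g y * deriv g y" by simp
      then show ?thesis by (simp add: distrib_right)
    qed
    have "((\<lambda>x. S_op g (T_op g h) x - T_op g (T_op g h) x - T_op g (S_op g h) x) has_field_derivative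
        (deriv (T_op g h) y * g y - T_op g h y * deriv g y - S_op g h y * deriv g y)) (at y)"
      by (rule DERIV_diff[OF DERIV_diff[OF S_deriv[OF g Th y] T_deriv[OF g Th y]] T_deriv[OF g Sh y]])
    moreover have "deriv (T_op g h) y * g y - T_op g h y * deriv g y - S_op g h y * deriv g y = 0"
    proof -
      have "deriv (T_op g h) y * g y - T_op g h y * deriv g y - S_op g h y * deriv g y
          = h y * deriv g y * g y - (T_op g h y * deriv g y + S_op g h y * deriv g y)"
        by (simp add: dT diff_diff_eq)
      also have "\<dots> = 0" unfolding e by (simp add: mult_ac)
      finally show ?thesis .
    qed
    ultimately show "((\<lambda>x. S_op g (T_op g h) x - T_op g (T_op g h) x - T_op g (S_op g h) x) has_field_derivative 0) (at y)"
      by simp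
  qed simp
  then show ?thesis by simp
qed



lemma seg_in: "z \<in> unit_disc \<Longrightarrow> path_image (linepath 0 z) \<subseteq> unit_disc"
  using D_seg by simp

lemma T_cong: "(\<And>x. x \<in> unit_disc \<Longrightarrow> u x = v x) \<Longrightarrow> z \<in> unit_disc \<Longrightarrow> T_op g u z = T_op g v z"
  unfolding T_op_def
proof (rule contour_integral_eq)
  fix x assume "(\<And>x. x \<in> unit_disc \<Longrightarrow> u x = v x)" "z \<in> unit_disc" "x \<in> path_image (linepath 0 z)"
  then show "u x * deriv g x = v x * deriv g x" using seg_in by (metis subsetD)
qed

lemma deriv_eqD: "(\<And>x. x \<in> unit_disc \<Longrightarrow> u x = v x) \<Longrightarrow> y \<in> unit_disc \<Longrightarrow> deriv u y = deriv v y"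
  by (rule deriv_cong_ev[OF _ refl], rule eventually_mono[OF eventually_nhds_in_open[OF D_open]]) auto

lemma S_cong: "(\<And>x. x \<in> unit_disc \<Longrightarrow> u x = v x) \<Longrightarrow> z \<in> unit_disc \<Longrightarrow> S_op g u z = S_op g v z"
  unfolding S_op_def
proof (rule contour_integral_eq)
  fix x assume "(\<And>x. x \<in> unit_disc \<Longrightarrow> u x = v x)" "z \<in> unit_disc" "x \<in> path_image (linepath 0 z)"
  then show "deriv u x * g x = deriv v x * g x" using seg_in deriv_eqD by (metis subsetD)
qed

lemma integrable:
  "\<phi> holomorphic_on unit_disc \<Longrightarrow> z \<in> unit_disc \<Longrightarrow> \<phi> contour_integrable_on linepath 0 z"
  by (rule contour_integrable_continuous_linepath)
     (meson D_seg continuous_on_subset holomorphic_on_imp_continuous_on)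

lemma T_lin:
  assumes g: "g holomorphic_on unit_disc" and u: "\<And>i. i \<in> A \<Longrightarrow> u i holomorphic_on unit_disc"
    and A: "finite A" and z: "z \<in> unit_disc"
  shows "T_op g (\<lambda>x. \<Sum>i\<in>A. c i * u i x) z = (\<Sum>i\<in>A. c i * T_op g (u i) z)"
proof -
  have "T_op g (\<lambda>x. \<Sum>i\<in>A. c i * u i x) z =
     contour_integral (linepath 0 z) (\<lambda>x. \<Sum>i\<in>A. c i * (u i x * deriv g x))"
    unfolding T_op_def by (simp add: sum_distrib_right mult.assoc)
  also have "\<dots> = (\<Sum>i\<in>A. contour_integral (linepath 0 z) (\<lambda>x. c i * (u i x * deriv g x)))"
    by (rule contour_integral_sum[OF A], rule integrable[OF _ z], rule holomorphic_on_mult[OF holomorphic_on_const],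
        rule holomorphic_on_mult[OF u holomorphic_deriv[OF g D_open]])
  also have "\<dots> = (\<Sum>i\<in>A. c i * T_op g (u i) z)"
    unfolding T_op_def
    by (rule sum.cong[OF refl], rule contour_integral_lmul, rule integrable[OF _ z],
        rule holomorphic_on_mult[OF u holomorphic_deriv[OF g D_open]])
  finally show ?thesis .
qed

lemma S_lin:
  assumes g: "g holomorphic_on unit_disc" and u: "\<And>i. i \<in> A \<Longrightarrow> u i holomorphic_on unit_disc"
    and A: "finite A" and z: "z \<in> unit_disc"
  shows "S_op g (\<lambda>x. \<Sum>i\<in>A. c i * u i x) z = (\<Sum>i\<in>A. c i * S_op g (u i) z)"
proof -
  have d: "deriv (\<lambda>x. \<Sum>i\<in>A. c i * u i x) y = (\<Sum>i\<in>A. c i * deriv (u i) y)" if y: "y \<in> unit_disc" for y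
    by (rule DERIV_imp_deriv, rule DERIV_sum, rule DERIV_cmult, rule hol_deriv[OF u y])
  have "S_op g (\<lambda>x. \<Sum>i\<in>A. c i * u i x) z =
     contour_integral (linepath 0 z) (\<lambda>x. \<Sum>i\<in>A. c i * (deriv (u i) x * g x))"
    unfolding S_op_def
  proof (rule contour_integral_eq)
    fix x assume "x \<in> path_image (linepath 0 z)"
    then have "x \<in> unit_disc" using seg_in[OF z] by blast
    then show "deriv (\<lambda>x. \<Sum>i\<in>A. c i * u i x) x * g x = (\<Sum>i\<in>A. c i * (deriv (u i) x * g x))"
      using d by (simp add: sum_distrib_right mult.assoc)
  qed
  also have "\<dots> = (\<Sum>i\<in>A. contour_integral (linepath 0 z) (\<lambda>x. c i * (deriv (u i) x * g x)))"
    by (rule contour_integral_sum[OF A], rule integrable[OF _ z], rule holomorphic_on_mult[OF holomorphic_on_const],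
        rule holomorphic_on_mult[OF holomorphic_deriv[OF u D_open] g])
  also have "\<dots> = (\<Sum>i\<in>A. c i * S_op g (u i) z)"
    unfolding S_op_def
    by (rule sum.cong[OF refl], rule contour_integral_lmul, rule integrable[OF _ z],
        rule holomorphic_on_mult[OF holomorphic_deriv[OF u D_open] g])
  finally show ?thesis .
qed

lemma T_diff:
  assumes g: "g holomorphic_on unit_disc" and u: "u holomorphic_on unit_disc" and v: "v holomorphic_on unit_disc" and z: "z \<in> unit_disc"
  shows "T_op g (\<lambda>x. u x - v x) z = T_op g u z - T_op g v z"
proof -
  have dg: "deriv g holomorphic_on unit_disc" by (rule holomorphic_deriv[OF g D_open])
  have i1: "(\<lambda>x. u x * deriv g x) contour_integrable_on linepath 0 z"
    by (rule integrable[OF holomorphic_on_mult[OF u dg] z])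
  have i2: "(\<lambda>x. v x * deriv g x) contour_integrable_on linepath 0 z"
    by (rule integrable[OF holomorphic_on_mult[OF v dg] z])
  have "T_op g (\<lambda>x. u x - v x) z = contour_integral (linepath 0 z) (\<lambda>x. u x * deriv g x - v x * deriv g x)"
    unfolding T_op_def by (simp add: left_diff_distrib)
  also have "\<dots> = T_op g u z - T_op g v z"
    unfolding T_op_def by (rule contour_integral_diff[OF i1 i2])
  finally show ?thesis .
qed

lemma S_diff:
  assumes g: "g holomorphic_on unit_disc" and u: "u holomorphic_on unit_disc" and v: "v holomorphic_on unit_disc" and z: "z \<in> unit_disc"
  shows "S_op g (\<lambda>x. u x - v x) z = S_op g u z - S_op g v z"
proof -
  have d: "deriv (\<lambda>x. u x - v x) y = deriv u y - deriv v y" if y: "y \<in> unit_disc" for y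
    by (rule DERIV_imp_deriv, rule DERIV_diff, rule hol_deriv[OF u y], rule hol_deriv[OF v y])
  have i1: "(\<lambda>x. deriv u x * g x) contour_integrable_on linepath 0 z"
    by (rule integrable[OF holomorphic_on_mult[OF holomorphic_deriv[OF u D_open] g] z])
  have i2: "(\<lambda>x. deriv v x * g x) contour_integrable_on linepath 0 z"
    by (rule integrable[OF holomorphic_on_mult[OF holomorphic_deriv[OF v D_open] g] z])
  have "S_op g (\<lambda>x. u x - v x) z = contour_integral (linepath 0 z) (\<lambda>x. deriv u x * g x - deriv v x * g x)"
    unfolding S_op_def
  proof (rule contour_integral_eq)
    fix x assume "x \<in> path_image (linepath 0 z)"
    then have "x \<in> unit_disc" using seg_in[OF z] by blast
    then show "deriv (\<lambda>x. u x - v x) x * g x = deriv u x * g x - deriv v x * g x"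
      using d by (simp add: left_diff_distrib)
  qed
  also have "\<dots> = S_op g u z - S_op g v z"
    unfolding S_op_def by (rule contour_integral_diff[OF i1 i2])
  finally show ?thesis .
qed


definition Xt where "Xt g h p q = (S_op g ^^ p) ((T_op g ^^ q) h)"

lemma Tpow_hol: "g holomorphic_on unit_disc \<Longrightarrow> h holomorphic_on unit_disc \<Longrightarrow> (T_op g ^^ q) h holomorphic_on unit_disc"
  by (induction q) (auto intro: T_hol)

lemma Xt_hol: "g holomorphic_on unit_disc \<Longrightarrow> h holomorphic_on unit_disc \<Longrightarrow> Xt g h p q holomorphic_on unit_disc"
  unfolding Xt_def by (induction p) (auto intro: S_hol Tpow_hol)

lemma Xt_0: "h 0 = 0 \<Longrightarrow> Xt g h p q 0 = 0"
proof (induction p)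
  case 0 then show ?case unfolding Xt_def by (cases q) simp_all
next
  case (Suc p) then show ?case unfolding Xt_def by simp
qed

lemma Xt_S: "S_op g (Xt g h p q) = Xt g h (Suc p) q" unfolding Xt_def by simp
lemma Xt_T0: "T_op g (Xt g h 0 q) = Xt g h 0 (Suc q)" unfolding Xt_def by simp

definition Low :: "nat \<Rightarrow> nat \<Rightarrow> ((complex\<Rightarrow>complex) \<Rightarrow> (complex\<Rightarrow>complex) \<Rightarrow> complex \<Rightarrow> complex) \<Rightarrow> bool" where
  "Low N m \<Phi> \<longleftrightarrow> (\<exists>e::nat\<Rightarrow>int. \<forall>g h. g holomorphic_on unit_disc \<longrightarrow> h holomorphic_on unit_disc \<longrightarrow> h 0 = 0 \<longrightarrow>
     (\<forall>z\<in>unit_disc. \<Phi> g h z = (\<Sum>p<m. of_int (e p) * Xt g h p (N - p) z)))"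

lemma LowI: "(\<And>g h z. g holomorphic_on unit_disc \<Longrightarrow> h holomorphic_on unit_disc \<Longrightarrow> h 0 = 0 \<Longrightarrow> z \<in> unit_disc \<Longrightarrow>
     \<Phi> g h z = (\<Sum>p<m. of_int (e p) * Xt g h p (N - p) z)) \<Longrightarrow> Low N m \<Phi>"
  unfolding Low_def by blast

lemma LowE: assumes "Low N m \<Phi>"
  obtains e where "\<And>g h z. g holomorphic_on unit_disc \<Longrightarrow> h holomorphic_on unit_disc \<Longrightarrow> h 0 = 0 \<Longrightarrow> z \<in> unit_disc \<Longrightarrow>
     \<Phi> g h z = (\<Sum>p<m. of_int (e p) * Xt g h p (N - p) z)"
  using assms unfolding Low_def by blast

lemma Low_cong:
  assumes "Low N m \<Phi>" "\<And>g h z. g holomorphic_on unit_disc \<Longrightarrow> h holomorphic_on unit_disc \<Longrightarrow> h 0 = 0 \<Longrightarrow> z \<in> unit_disc \<Longrightarrow>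
     \<Psi> g h z = \<Phi> g h z"
  shows "Low N m \<Psi>"
  using assms(1) by (elim LowE) (rule LowI, simp add: assms(2))

lemma Low_zero:
  assumes "\<And>g h z. g holomorphic_on unit_disc \<Longrightarrow> h holomorphic_on unit_disc \<Longrightarrow> h 0 = 0 \<Longrightarrow> z \<in> unit_disc \<Longrightarrow> \<Phi> g h z = 0"
  shows "Low N m \<Phi>"
  by (rule LowI[where e="\<lambda>_. 0"]) (simp add: assms)

lemma Low_basis: "p < m \<Longrightarrow> Low N m (\<lambda>g h. Xt g h p (N - p))"
proof (rule LowI[where e="\<lambda>q. if q = p then 1 else 0"])
  fix g h z assume "p < m"
  have "(\<Sum>q<m. of_int (if q = p then 1 else 0) * Xt g h q (N - q) z) = (\<Sum>q<m. if q = p then Xt g h q (N - q) z else 0)"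
    by (rule sum.cong) auto
  also have "\<dots> = Xt g h p (N - p) z" using \<open>p < m\<close> by (simp add: sum.delta)
  finally show "Xt g h p (N - p) z = (\<Sum>q<m. of_int (if q = p then 1 else 0) * Xt g h q (N - q) z)" by simp
qed

lemma Low_mono:
  assumes "Low N m \<Phi>" "m \<le> m'"
  shows "Low N m' \<Phi>"
proof -
  obtain e where e: "\<And>g h z. g holomorphic_on unit_disc \<Longrightarrow> h holomorphic_on unit_disc \<Longrightarrow> h 0 = 0 \<Longrightarrow> z \<in> unit_disc \<Longrightarrow>
     \<Phi> g h z = (\<Sum>p<m. of_int (e p) * Xt g h p (N - p) z)" using LowE[OF assms(1)] by blast
  show ?thesis
  proof (rule LowI[where e="\<lambda>p. if p < m then e p else 0"])
    fix g h z
    assume *: "g holomorphic_on unit_disc" "h holomorphic_on unit_disc" "h 0 = 0" "z \<in> unit_disc"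
    have "(\<Sum>p<m'. of_int (if p < m then e p else 0) * Xt g h p (N - p) z) = (\<Sum>p<m. of_int (e p) * Xt g h p (N - p) z)"
      by (rule sum.mono_neutral_cong_right) (use assms(2) in auto)
    then show "\<Phi> g h z = (\<Sum>p<m'. of_int (if p < m then e p else 0) * Xt g h p (N - p) z)"
      using e[OF *] by simp
  qed
qed

lemma Low_add:
  assumes "Low N m \<Phi>" "Low N m \<Psi>"
  shows "Low N m (\<lambda>g h z. \<Phi> g h z + \<Psi> g h z)"
proof -
  obtain e where e: "\<And>g h z. g holomorphic_on unit_disc \<Longrightarrow> h holomorphic_on unit_disc \<Longrightarrow> h 0 = 0 \<Longrightarrow> z \<in> unit_disc \<Longrightarrow>
     \<Phi> g h z = (\<Sum>p<m. of_int (e p) * Xt g h p (N - p) z)" using LowE[OF assms(1)] by blast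
  obtain d where d: "\<And>g h z. g holomorphic_on unit_disc \<Longrightarrow> h holomorphic_on unit_disc \<Longrightarrow> h 0 = 0 \<Longrightarrow> z \<in> unit_disc \<Longrightarrow>
     \<Psi> g h z = (\<Sum>p<m. of_int (d p) * Xt g h p (N - p) z)" using LowE[OF assms(2)] by blast
  show ?thesis
    by (rule LowI[where e="\<lambda>p. e p + d p"]) (simp add: e d sum.distrib algebra_simps)
qed

lemma Low_smult:
  assumes "Low N m \<Phi>"
  shows "Low N m (\<lambda>g h z. of_int c * \<Phi> g h z)"
proof -
  obtain e where e: "\<And>g h z. g holomorphic_on unit_disc \<Longrightarrow> h holomorphic_on unit_disc \<Longrightarrow> h 0 = 0 \<Longrightarrow> z \<in> unit_disc \<Longrightarrow>
     \<Phi> g h z = (\<Sum>p<m. of_int (e p) * Xt g h p (N - p) z)" using LowE[OF assms(1)] by blast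
  show ?thesis
    by (rule LowI[where e="\<lambda>p. c * e p"]) (simp add: e sum_distrib_left algebra_simps)
qed

lemma Low_diff:
  assumes "Low N m \<Phi>" "Low N m \<Psi>"
  shows "Low N m (\<lambda>g h z. \<Phi> g h z - \<Psi> g h z)"
  using Low_add[OF assms(1) Low_smult[OF assms(2), of "-1"]] by simp

lemma Low_sum:
  assumes "finite A" "\<And>i. i \<in> A \<Longrightarrow> Low N m (\<Phi> i)"
  shows "Low N m (\<lambda>g h z. \<Sum>i\<in>A. \<Phi> i g h z)"
  using assms
proof (induction A rule: finite_induct)
  case empty then show ?case by (intro Low_zero) simp
next
  case (insert x F)
  then show ?case using Low_add[of N m "\<Phi> x" "\<lambda>g h z. \<Sum>i\<in>F. \<Phi> i g h z"] by simp
qed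



lemma Low_S:
  assumes "Low N m \<Phi>"
  shows "Low (Suc N) (Suc m) (\<lambda>g h. S_op g (\<Phi> g h))"
proof -
  obtain e where e: "\<And>g h z. g holomorphic_on unit_disc \<Longrightarrow> h holomorphic_on unit_disc \<Longrightarrow> h 0 = 0 \<Longrightarrow> z \<in> unit_disc \<Longrightarrow>
     \<Phi> g h z = (\<Sum>p<m. of_int (e p) * Xt g h p (N - p) z)" using LowE[OF assms] by blast
  show ?thesis
  proof (rule LowI[where e="\<lambda>p. if p = 0 then 0 else e (p - 1)"])
    fix g h z
    assume g: "g holomorphic_on unit_disc" and h: "h holomorphic_on unit_disc" and h0: "h 0 = 0" and z: "z \<in> unit_disc"
    have "S_op g (\<Phi> g h) z = S_op g (\<lambda>x. \<Sum>p<m. of_int (e p) * Xt g h p (N - p) x) z"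
      by (rule S_cong[OF _ z]) (rule e[OF g h h0])
    also have "\<dots> = (\<Sum>p<m. of_int (e p) * S_op g (Xt g h p (N - p)) z)"
      by (rule S_lin[OF g _ finite_lessThan z]) (rule Xt_hol[OF g h])
    also have "\<dots> = (\<Sum>p<m. of_int (e p) * Xt g h (Suc p) (Suc N - Suc p) z)"
      by (simp add: Xt_S)
    also have "\<dots> = (\<Sum>p<Suc m. of_int (if p = 0 then 0 else e (p - 1)) * Xt g h p (Suc N - p) z)"
      by (subst sum.lessThan_Suc_shift) simp
    finally show "S_op g (\<Phi> g h) z = (\<Sum>p<Suc m. of_int (if p = 0 then 0 else e (p - 1)) * Xt g h p (Suc N - p) z)" .
  qed
qed

lemma Low_T:
  "m \<le> Suc N \<Longrightarrow> Low N m \<Phi> \<Longrightarrow> Low (Suc N) m (\<lambda>g h. T_op g (\<Phi> g h))"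
proof (induction m arbitrary: N \<Phi>)
  case 0
  obtain e where e: "\<And>g h z. g holomorphic_on unit_disc \<Longrightarrow> h holomorphic_on unit_disc \<Longrightarrow> h 0 = 0 \<Longrightarrow> z \<in> unit_disc \<Longrightarrow>
     \<Phi> g h z = (\<Sum>p<0. of_int (e p) * Xt g h p (N - p) z)" using LowE[OF 0(2)] by blast
  show ?case
  proof (rule Low_zero)
    fix g h z
    assume g: "g holomorphic_on unit_disc" and h: "h holomorphic_on unit_disc" and h0: "h 0 = 0" and z: "z \<in> unit_disc"
    have "T_op g (\<Phi> g h) z = T_op g (\<lambda>x. 0) z"
      by (rule T_cong[OF _ z]) (simp add: e[OF g h h0])
    then show "T_op g (\<Phi> g h) z = 0" by (simp add: T_op_def)
  qed
next
  case (Suc m)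
  note IH = Suc.IH and prems = Suc.prems
  obtain e where e: "\<And>g h z. g holomorphic_on unit_disc \<Longrightarrow> h holomorphic_on unit_disc \<Longrightarrow> h 0 = 0 \<Longrightarrow> z \<in> unit_disc \<Longrightarrow>
     \<Phi> g h z = (\<Sum>p<Suc m. of_int (e p) * Xt g h p (N - p) z)" using LowE[OF Suc.prems(2)] by blast
  have each: "Low (Suc N) (Suc m) (\<lambda>g h. T_op g (Xt g h p (N - p)))" if p: "p < Suc m" for p
  proof (cases "p < m")
    case True
    have "Low (Suc N) m (\<lambda>g h. T_op g (Xt g h p (N - p)))"
      by (rule IH[OF _ Low_basis[OF True]]) (use Suc.prems(1) in simp)
    then show ?thesis by (rule Low_mono) simp
  next
    case False
    then have pm: "p = m" using p by simp
    show ?thesis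
    proof (cases m)
      case 0
      have "Low (Suc N) (Suc 0) (\<lambda>g h. Xt g h 0 (Suc N - 0))" by (rule Low_basis) simp
      then show ?thesis using pm 0 by (simp add: Xt_T0)
    next
      case (Suc k)
      obtain q where N: "N = Suc k + q" using prems(1) Suc by (metis le_Suc_ex Suc_le_mono)
      have Y: "Low (k + q) (Suc k) (\<lambda>g h. Xt g h k q)"
        using Low_basis[of k "Suc k" "k + q"] by simp
      have TY: "Low (Suc (k + q)) (Suc k) (\<lambda>g h. T_op g (Xt g h k q))"
        unfolding Suc[symmetric] by (rule IH[OF _ Y[folded Suc]]) (simp add: Suc)
      have STY: "Low (Suc (Suc (k + q))) (Suc (Suc k)) (\<lambda>g h. S_op g (T_op g (Xt g h k q)))"
        by (rule Low_S[OF TY])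
      have TTY: "Low (Suc (Suc (k + q))) (Suc k) (\<lambda>g h. T_op g (T_op g (Xt g h k q)))"
        unfolding Suc[symmetric] by (rule IH[OF _ TY[folded Suc]]) (simp add: Suc)
      have D: "Low (Suc (Suc (k + q))) (Suc (Suc k)) (\<lambda>g h z. S_op g (T_op g (Xt g h k q)) z - T_op g (T_op g (Xt g h k q)) z)"
        by (rule Low_diff[OF STY Low_mono[OF TTY]]) simp
      have D': "Low (Suc N) (Suc m) (\<lambda>g h z. S_op g (T_op g (Xt g h k q)) z - T_op g (T_op g (Xt g h k q)) z)"
        using D by (simp add: N Suc)
      show ?thesis
      proof (rule Low_cong[OF D'])
        fix g h z
        assume g: "g holomorphic_on unit_disc" and h: "h holomorphic_on unit_disc" and h0: "h 0 = 0" and z: "z \<in> unit_disc"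
        have "T_op g (Xt g h p (N - p)) z = T_op g (S_op g (Xt g h k q)) z"
          using pm Suc N by (simp add: Xt_S)
        also have "\<dots> = S_op g (T_op g (Xt g h k q)) z - T_op g (T_op g (Xt g h k q)) z"
          by (rule TS[OF g Xt_hol[OF g h] Xt_0[of h, OF h0] z])
        finally show "T_op g (Xt g h p (N - p)) z = S_op g (T_op g (Xt g h k q)) z - T_op g (T_op g (Xt g h k q)) z" .
      qed
    qed
  qed
  have sum: "Low (Suc N) (Suc m) (\<lambda>g h z. \<Sum>p<Suc m. of_int (e p) * T_op g (Xt g h p (N - p)) z)"
    by (rule Low_sum[OF finite_lessThan], rule Low_smult, rule each) simp
  show ?case
  proof (rule Low_cong[OF sum])
    fix g h z
    assume g: "g holomorphic_on unit_disc" and h: "h holomorphic_on unit_disc" and h0: "h 0 = 0" and z: "z \<in> unit_disc"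
    have "T_op g (\<Phi> g h) z = T_op g (\<lambda>x. \<Sum>p<Suc m. of_int (e p) * Xt g h p (N - p) x) z"
      by (rule T_cong[OF _ z]) (rule e[OF g h h0])
    also have "\<dots> = (\<Sum>p<Suc m. of_int (e p) * T_op g (Xt g h p (N - p)) z)"
      by (rule T_lin[OF g _ finite_lessThan z]) (rule Xt_hol[OF g h])
    finally show "T_op g (\<Phi> g h) z = (\<Sum>p<Suc m. of_int (e p) * T_op g (Xt g h p (N - p)) z)" .
  qed
qed



lemma Low_TS: "Low (a + b + 1) a (\<lambda>g h z. T_op g (Xt g h a b) z - Xt g h a (Suc b) z)"
proof (induction a arbitrary: b)
  case 0
  show ?case by (rule Low_zero) (simp add: Xt_T0)
next
  case (Suc k)
  have R: "Low (k + Suc b + 1) k (\<lambda>g h z. T_op g (Xt g h k (Suc b)) z - Xt g h k (Suc (Suc b)) z)"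
    by (rule Suc.IH)
  have R: "Low (k + b + 1) k (\<lambda>g h z. T_op g (Xt g h k b) z - Xt g h k (Suc b) z)"
    by (rule Suc.IH)
  have B: "Low (k + b + 1) (Suc k) (\<lambda>g h. Xt g h k (Suc b))"
    using Low_basis[of k "Suc k" "k + b + 1"] by simp
  have TY: "Low (k + b + 1) (Suc k) (\<lambda>g h. T_op g (Xt g h k b))"
    by (rule Low_cong[OF Low_add[OF Low_mono[OF R] B]]) simp_all
  have SR: "Low (Suc (k + b + 1)) (Suc k) (\<lambda>g h. S_op g (\<lambda>z. T_op g (Xt g h k b) z - Xt g h k (Suc b) z))"
    by (rule Low_S[OF R])
  have TTY: "Low (Suc (k + b + 1)) (Suc k) (\<lambda>g h. T_op g (T_op g (Xt g h k b)))"
    by (rule Low_T[OF _ TY]) simp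
  have D: "Low (Suc k + b + 1) (Suc k) (\<lambda>g h z. S_op g (\<lambda>z. T_op g (Xt g h k b) z - Xt g h k (Suc b) z) z - T_op g (T_op g (Xt g h k b)) z)"
    using Low_diff[OF SR TTY] by simp
  show ?case
  proof (rule Low_cong[OF D])
    fix g h z
    assume g: "g holomorphic_on unit_disc" and h: "h holomorphic_on unit_disc" and h0: "h 0 = 0" and z: "z \<in> unit_disc"
    have "T_op g (Xt g h (Suc k) b) z - Xt g h (Suc k) (Suc b) z
        = T_op g (S_op g (Xt g h k b)) z - S_op g (Xt g h k (Suc b)) z"
      by (simp add: Xt_S[symmetric])
    also have "\<dots> = S_op g (T_op g (Xt g h k b)) z - T_op g (T_op g (Xt g h k b)) z - S_op g (Xt g h k (Suc b)) z"
      by (simp add: TS[OF g Xt_hol[OF g h] Xt_0[of h, OF h0] z])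
    also have "\<dots> = S_op g (\<lambda>z. T_op g (Xt g h k b) z - Xt g h k (Suc b) z) z - T_op g (T_op g (Xt g h k b)) z"
      by (simp add: S_diff[OF g T_hol[OF g Xt_hol[OF g h]] Xt_hol[OF g h] z])
    finally show "T_op g (Xt g h (Suc k) b) z - Xt g h (Suc k) (Suc b) z =
      S_op g (\<lambda>z. T_op g (Xt g h k b) z - Xt g h k (Suc b) z) z - T_op g (T_op g (Xt g h k b)) z" .
  qed
qed

lemma word_Cons: "word_op g (b # w) = (if b then S_op g else T_op g) \<circ> word_op g w"
  by (simp add: word_op_def)

lemma word_hol: "g holomorphic_on unit_disc \<Longrightarrow> h holomorphic_on unit_disc \<Longrightarrow> word_op g w h holomorphic_on unit_disc"
  by (induction w) (auto simp: word_Cons word_op_def[of g "[]"] intro: T_hol S_hol)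

lemma word_cong: "(\<And>x. x \<in> unit_disc \<Longrightarrow> u x = v x) \<Longrightarrow> z \<in> unit_disc \<Longrightarrow> word_op g w u z = word_op g w v z"
proof (induction w arbitrary: z)
  case Nil then show ?case by (simp add: word_op_def)
next
  case (Cons b w)
  have "\<And>x. x \<in> unit_disc \<Longrightarrow> word_op g w u x = word_op g w v x" using Cons by blast
  then show ?case using Cons.prems(2) by (auto simp: word_Cons intro: T_cong S_cong)
qed

lemma word_Low:
  "Low (length w) (length (filter (\<lambda>b. b) w))
     (\<lambda>g h z. word_op g w h z - Xt g h (length (filter (\<lambda>b. b) w)) (length (filter Not w)) z)"
proof (induction w)
  case Nil
  show ?case by (rule Low_zero) (simp add: word_op_def Xt_def)
next
  case (Cons b w)
  let ?m = "length (filter (\<lambda>b. b) w)" and ?n = "length (filter Not w)"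
  have len: "?m + ?n = length w" using sum_length_filter_compl[of "\<lambda>b. b" w] by simp
  show ?case
  proof (cases b)
    case True
    have L: "Low (Suc (length w)) (Suc ?m) (\<lambda>g h. S_op g (\<lambda>z. word_op g w h z - Xt g h ?m ?n z))"
      by (rule Low_S[OF Cons.IH])
    have G: "Low (Suc (length w)) (Suc ?m) (\<lambda>g h z. word_op g (True # w) h z - Xt g h (Suc ?m) ?n z)"
    proof (rule Low_cong[OF L], goal_cases)
      case (1 g h z)
      then show ?case
        by (simp add: word_Cons S_diff[OF 1(1) word_hol[OF 1(1) 1(2)] Xt_hol[OF 1(1) 1(2)] 1(4)] Xt_S[symmetric])
    qed
    then show ?thesis using True by simp
  next
    case False
    have L1: "Low (Suc (length w)) ?m (\<lambda>g h. T_op g (\<lambda>z. word_op g w h z - Xt g h ?m ?n z))"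
      by (rule Low_T[OF _ Cons.IH]) (use len in simp)
    have L2: "Low (Suc (length w)) ?m (\<lambda>g h z. T_op g (Xt g h ?m ?n) z - Xt g h ?m (Suc ?n) z)"
      using Low_TS[of ?m ?n] len by simp
    have G: "Low (Suc (length w)) ?m (\<lambda>g h z. word_op g (False # w) h z - Xt g h ?m (Suc ?n) z)"
    proof (rule Low_cong[OF Low_add[OF L1 L2]], goal_cases)
      case (1 g h z)
      then show ?case
        by (simp add: word_Cons T_diff[OF 1(1) word_hol[OF 1(1) 1(2)] Xt_hol[OF 1(1) 1(2)] 1(4)])
    qed
    then show ?thesis using False by simp
  qed
qed



lemma S_Pi0:
  assumes f: "f holomorphic_on unit_disc" and z: "z \<in> unit_disc"
  shows "S_op g f z = S_op g (Pi0 f) z"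
  unfolding S_op_def
proof (rule contour_integral_eq)
  fix x assume "x \<in> path_image (linepath 0 z)"
  then have x: "x \<in> unit_disc" using seg_in[OF z] by blast
  have "deriv (Pi0 f) x = deriv f x - 0"
    unfolding Pi0_def by (rule DERIV_imp_deriv, rule DERIV_diff[OF hol_deriv[OF f x] DERIV_const])
  then show "deriv f x * g x = deriv (Pi0 f) x * g x" by simp
qed

lemma word_snoc: "word_op g (v @ [b]) u = word_op g v ((if b then S_op g else T_op g) u)"
  by (induction v) (simp_all add: word_op_def)

lemma word_Pi0:
  assumes f: "f holomorphic_on unit_disc" and w: "w \<noteq> []" "last w = True" and z: "z \<in> unit_disc"
  shows "word_op g w f z = word_op g w (Pi0 f) z"
proof -
  have ww: "w = butlast w @ [True]" using w by (metis append_butlast_last_id)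
  have "word_op g w f z = word_op g (butlast w) (S_op g f) z"
    by (subst ww, subst word_snoc) simp
  also have "\<dots> = word_op g (butlast w) (S_op g (Pi0 f)) z"
    by (rule word_cong[OF _ z]) (rule S_Pi0[OF f])
  also have "\<dots> = word_op g w (Pi0 f) z"
    by (subst (2) ww, subst word_snoc) simp
  finally show ?thesis .
qed

theorem proposition3p8:
  fixes m n :: nat and w :: "bool list"
  assumes "length (filter (\<lambda>b. b) w) = m"
    and "length (filter Not w) = n"
    and "w \<noteq> []" and "last w = True"
  shows "\<exists>c :: nat \<Rightarrow> int. \<forall>g. g holomorphic_on unit_disc \<longrightarrow>
           (\<forall>f. f holomorphic_on unit_disc \<longrightarrow> (\<forall>z\<in>unit_disc.
              word_op g w f z =
                ((S_op g ^^ m) ((T_op g ^^ n) (Pi0 f))) z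
                + (\<Sum>j=1..m. of_int (c j) * ((S_op g ^^ (m - j)) ((T_op g ^^ (n + j)) (Pi0 f))) z)))"
proof -
  have len: "length w = m + n" using sum_length_filter_compl[of "\<lambda>b. b" w] assms(1,2) by simp
  obtain e where e: "\<And>g h z. g holomorphic_on unit_disc \<Longrightarrow> h holomorphic_on unit_disc \<Longrightarrow> h 0 = 0 \<Longrightarrow> z \<in> unit_disc \<Longrightarrow>
     word_op g w h z - Xt g h m n z = (\<Sum>p<m. of_int (e p) * Xt g h p (m + n - p) z)"
    using LowE[OF word_Low[of w]] unfolding assms(1,2) len by blast
  show ?thesis
  proof (intro exI[of _ "\<lambda>j. e (m - j)"] allI impI ballI)
    fix g f z
    assume g: "g holomorphic_on unit_disc" and f: "f holomorphic_on unit_disc" and z: "z \<in> unit_disc"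
    have h: "Pi0 f holomorphic_on unit_disc" unfolding Pi0_def using f by (intro holomorphic_on_diff holomorphic_on_const)
    have h0: "Pi0 f 0 = 0" by (simp add: Pi0_def)
    have re: "(\<Sum>j=1..m. of_int (e (m - j)) * ((S_op g ^^ (m - j)) ((T_op g ^^ (n + j)) (Pi0 f))) z)
        = (\<Sum>p<m. of_int (e p) * Xt g (Pi0 f) p (m + n - p) z)"
      unfolding Xt_def
      by (rule sum.reindex_bij_witness[where i="\<lambda>p. m - p" and j="\<lambda>j. m - j"]) auto
    have "word_op g w f z = word_op g w (Pi0 f) z" by (rule word_Pi0[OF f assms(3,4) z])
    also have "\<dots> = Xt g (Pi0 f) m n z + (\<Sum>p<m. of_int (e p) * Xt g (Pi0 f) p (m + n - p) z)"
      using e[OF g h h0 z] by (simp add: algebra_simps)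
    finally show "word_op g w f z = ((S_op g ^^ m) ((T_op g ^^ n) (Pi0 f))) z
                + (\<Sum>j=1..m. of_int (e (m - j)) * ((S_op g ^^ (m - j)) ((T_op g ^^ (n + j)) (Pi0 f))) z)"
      unfolding re by (simp add: Xt_def)
  qed
qed

end
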